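(* Let $G$ be a graph with a correspondence-cover $(L,H)$, and let $T$ be an induced subgraph of $G$ such that: (i) every vertex of $T$ has at most one neighbor outside $T$; (ii) $2\leq |L(u)|\leq |L(v)|$ for every $u\in V(T)$ that has a (unique) neighbor $v$ outside $T$; (iii) the restriction of $(L,H)$ to $G\setminus T$ has a fractional packing; (iv) every correspondence-cover $(L_T,H_T)$ of $T$ with $|L_T(u)|=|L(u)|$ for each $u\in V(T)$ having no neighbor outside $T$, and $|L_T(u)|=|L(u)|-1$ for each $u\in V(T)$ having a neighbor outside $T$, has a fractional packing. Then $(L,H)$ has a fractional packing.
   Context: All graphs are finite and simple. $G\setminus T$ is the subgraph induced by the vertices not in $T$. A correspondence-cover of a graph $G$ is a pair $(L,H)$ where $H$ is a graph and $L$ maps each $v\in V(G)$ to a subset $L(v)\subseteq V(H)$ such that: the sets $L(v)$ partition $V(H)$; each $L(v)$ induces a clique in $H$; if $uv\notin E(G)$ there are no edges of $H$ between $L(u)$ and $L(v)$; if $uv\in E(G)$ the edges of $H$ between $L(u)$ and $L(v)$ form a matching. The restriction of $(L,H)$ to an induced subgraph $G_0$ is the cover $(L_0,H_0)$ of $G_0$ with $L_0(v)=L(v)$ for $v\in V(G_0)$ and $H_0=H-\bigcup_{u\notin V(G_0)}L(u)$. An independent transversal of a cover is an independent set of the cover graph containing exactly one vertex of each list. A cover has a fractional packing if there is a probability distribution on its independent transversals $I$ such that $\Pr(x\in I)=1/|L(v)|$ for every vertex $v$ and every $x\in L(v)$ (lists need not have equal sizes). *)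

theory Defs
  imports "HOL-Probability.Probability"
begin

definition simple_graph :: "'v set \<Rightarrow> ('v \<Rightarrow> 'v \<Rightarrow> bool) \<Rightarrow> bool" where
  "simple_graph V E \<longleftrightarrow> finite V \<and>
     (\<forall>u v. E u v \<longrightarrow> u \<in> V \<and> v \<in> V \<and> u \<noteq> v \<and> E v u)"

definition induced_edges :: "('v \<Rightarrow> 'v \<Rightarrow> bool) \<Rightarrow> 'v set \<Rightarrow> 'v \<Rightarrow> 'v \<Rightarrow> bool" where
  "induced_edges E S = (\<lambda>u v. E u v \<and> u \<in> S \<and> v \<in> S)"

definition corr_cover :: "'v set \<Rightarrow> ('v \<Rightarrow> 'v \<Rightarrow> bool) \<Rightarrow> ('v \<Rightarrow> 'c set)
    \<Rightarrow> 'c set \<Rightarrow> ('c \<Rightarrow> 'c \<Rightarrow> bool) \<Rightarrow> bool" where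
  "corr_cover V E L VH EH \<longleftrightarrow>
     simple_graph VH EH \<and>
     (\<forall>v\<in>V. L v \<subseteq> VH) \<and> (\<Union>v\<in>V. L v) = VH \<and>
     (\<forall>u\<in>V. \<forall>v\<in>V. u \<noteq> v \<longrightarrow> L u \<inter> L v = {}) \<and>
     (\<forall>v\<in>V. \<forall>x\<in>L v. \<forall>y\<in>L v. x \<noteq> y \<longrightarrow> EH x y) \<and>
     (\<forall>u\<in>V. \<forall>v\<in>V. u \<noteq> v \<and> \<not> E u v \<longrightarrow> (\<forall>x\<in>L u. \<forall>y\<in>L v. \<not> EH x y)) \<and>
     (\<forall>u\<in>V. \<forall>v\<in>V. E u v \<longrightarrow>
        (\<forall>x\<in>L u. \<forall>y1\<in>L v. \<forall>y2\<in>L v. EH x y1 \<and> EH x y2 \<longrightarrow> y1 = y2) \<and>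
        (\<forall>y\<in>L v. \<forall>x1\<in>L u. \<forall>x2\<in>L u. EH x1 y \<and> EH x2 y \<longrightarrow> x1 = x2))"

definition indep_transversal :: "'v set \<Rightarrow> ('v \<Rightarrow> 'c set) \<Rightarrow> 'c set
    \<Rightarrow> ('c \<Rightarrow> 'c \<Rightarrow> bool) \<Rightarrow> 'c set \<Rightarrow> bool" where
  "indep_transversal V L VH EH I \<longleftrightarrow>
     I \<subseteq> VH \<and> (\<forall>v\<in>V. card (I \<inter> L v) = 1) \<and> (\<forall>x\<in>I. \<forall>y\<in>I. \<not> EH x y)"

definition frac_packing :: "'v set \<Rightarrow> ('v \<Rightarrow> 'c set) \<Rightarrow> 'c set
    \<Rightarrow> ('c \<Rightarrow> 'c \<Rightarrow> bool) \<Rightarrow> bool" where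
  "frac_packing V L VH EH \<longleftrightarrow>
     (\<exists>p :: 'c set pmf. set_pmf p \<subseteq> {I. indep_transversal V L VH EH I} \<and>
        (\<forall>v\<in>V. \<forall>x\<in>L v. measure_pmf.prob p {I. x \<in> I} = 1 / real (card (L v))))"

definition restr_VH :: "'v set \<Rightarrow> ('v \<Rightarrow> 'c set) \<Rightarrow> 'c set \<Rightarrow> 'v set \<Rightarrow> 'c set" where
  "restr_VH V L VH S = VH - (\<Union>u\<in>V - S. L u)"

definition restr_EH :: "'v set \<Rightarrow> ('v \<Rightarrow> 'c set) \<Rightarrow> 'c set \<Rightarrow> ('c \<Rightarrow> 'c \<Rightarrow> bool)
    \<Rightarrow> 'v set \<Rightarrow> 'c \<Rightarrow> 'c \<Rightarrow> bool" where
  "restr_EH V L VH EH S = (\<lambda>x y. EH x y \<and> x \<in> restr_VH V L VH S \<and> y \<in> restr_VH V L VH S)"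

end

theory Submission
  imports Defs
begin


lemma measure_bind_pmf': "measure (bind_pmf M N) X = (\<integral>x. measure (N x) X \<partial>M)"
proof -
  have "ennreal (measure (bind_pmf M N) X) = emeasure (bind_pmf M N) X"
    by (simp add: measure_pmf.emeasure_eq_measure)
  also have "\<dots> = (\<integral>\<^sup>+x. emeasure (N x) X \<partial>M)"
    by (rule emeasure_bind_pmf)
  also have "\<dots> = (\<integral>\<^sup>+x. ennreal (measure (N x) X) \<partial>M)"
    by (simp add: measure_pmf.emeasure_eq_measure)
  also have "\<dots> = ennreal (\<integral>x. measure (N x) X \<partial>M)"
    by (rule nn_integral_eq_integral) (auto intro!: measure_pmf.integrable_const_bound[where B=1])
  finally show ?thesis by (simp add: integral_nonneg)
qed

lemma integral_pmf_cong: "(\<And>y. y \<in> set_pmf M \<Longrightarrow> f y = g y) \<Longrightarrow> (\<integral>y. f y \<partial>measure_pmf M) = (\<integral>y. g y \<partial>measure_pmf M)"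
  by (rule integral_cong_AE) (auto simp: AE_measure_pmf_iff)

lemma ext_inj:
  assumes fA: "finite A" and fB: "finite B" and c: "card A \<le> card B"
    and m1: "\<forall>x\<in>A. \<forall>y1\<in>B. \<forall>y2\<in>B. R x y1 \<and> R x y2 \<longrightarrow> y1 = y2"
    and m2: "\<forall>y\<in>B. \<forall>x1\<in>A. \<forall>x2\<in>A. R x1 y \<and> R x2 y \<longrightarrow> x1 = x2"
  shows "\<exists>\<psi>. inj_on \<psi> A \<and> \<psi> ` A \<subseteq> B \<and> (\<forall>x\<in>A. \<forall>w\<in>B. R x w \<longrightarrow> \<psi> x = w)"
proof -
  define A1 where "A1 = {x\<in>A. \<exists>w\<in>B. R x w}"
  define m where "m x = (THE w. w \<in> B \<and> R x w)" for x
  have mx: "m x \<in> B \<and> R x (m x)" if xA1: "x \<in> A1" for x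
  proof -
    obtain w where w: "w \<in> B" "R x w" using xA1 A1_def by auto
    have "m x = w" unfolding m_def
      by (rule the_equality) (use w m1 xA1 A1_def in auto)
    then show ?thesis using w by simp
  qed
  have minj: "inj_on m A1"
    by (rule inj_onI) (metis (mono_tags, lifting) A1_def m2 mem_Collect_eq mx)
  have fA1: "finite A1" using fA A1_def by auto
  have A1A: "A1 \<subseteq> A" using A1_def by auto
  have mA1: "m ` A1 \<subseteq> B" using mx by auto
  have "card (A - A1) = card A - card A1" using fA1 A1A by (simp add: card_Diff_subset)
  moreover have "card (B - m ` A1) = card B - card A1"
    using mA1 fB minj by (simp add: card_Diff_subset card_image finite_subset)
  ultimately have "card (A - A1) \<le> card (B - m ` A1)" using c by simp
  then obtain g where g: "g ` (A - A1) \<subseteq> B - m ` A1" "inj_on g (A - A1)"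
    using card_le_inj[of "A - A1" "B - m ` A1"] fA fB by auto
  define \<psi> where "\<psi> x = (if x \<in> A1 then m x else g x)" for x
  have "inj_on \<psi> A"
  proof (rule inj_onI)
    fix x y assume xy: "x \<in> A" "y \<in> A" "\<psi> x = \<psi> y"
    show "x = y"
    proof (cases "x \<in> A1"; cases "y \<in> A1")
      assume "x \<in> A1" "y \<in> A1" then show ?thesis using xy minj \<psi>_def by (auto dest: inj_onD)
    next
      assume "x \<in> A1" "y \<notin> A1" then show ?thesis using xy g \<psi>_def by auto
    next
      assume "x \<notin> A1" "y \<in> A1" then show ?thesis using xy g \<psi>_def by force
    next
      assume "x \<notin> A1" "y \<notin> A1" then show ?thesis using xy g \<psi>_def by (auto dest: inj_onD)
    qed
  qed
  moreover have "\<psi> ` A \<subseteq> B" using g mA1 \<psi>_def by auto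
  moreover have "\<forall>x\<in>A. \<forall>w\<in>B. R x w \<longrightarrow> \<psi> x = w"
  proof (intro ballI impI)
    fix x w assume "x \<in> A" "w \<in> B" "R x w"
    then have "x \<in> A1" using A1_def by auto
    then show "\<psi> x = w" using mx[of x] m1 \<open>x\<in>A\<close> \<open>w\<in>B\<close> \<open>R x w\<close> \<psi>_def by auto
  qed
  ultimately show ?thesis by blast
qed



theorem mainTheorem11:
  fixes V :: "'v set" and E :: "'v \<Rightarrow> 'v \<Rightarrow> bool"
    and L :: "'v \<Rightarrow> 'c set" and VH :: "'c set" and EH :: "'c \<Rightarrow> 'c \<Rightarrow> bool"
    and T :: "'v set"
  assumes G: "simple_graph V E"
    and cover: "corr_cover V E L VH EH"
    and TV: "T \<subseteq> V"
    and i: "\<forall>u\<in>T. card {v \<in> V - T. E u v} \<le> 1"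
    and ii: "\<forall>u\<in>T. \<forall>v\<in>V - T. E u v \<longrightarrow> 2 \<le> card (L u) \<and> card (L u) \<le> card (L v)"
    and iii: "frac_packing (V - T) L (restr_VH V L VH (V - T)) (restr_EH V L VH EH (V - T))"
    and iv: "\<forall>(LT :: 'v \<Rightarrow> nat set) VHT EHT.
               corr_cover T (induced_edges E T) LT VHT EHT \<and>
               (\<forall>u\<in>T. (\<not> (\<exists>v\<in>V - T. E u v)) \<longrightarrow> card (LT u) = card (L u)) \<and>
               (\<forall>u\<in>T. (\<exists>v\<in>V - T. E u v) \<longrightarrow> card (LT u) = card (L u) - 1)
               \<longrightarrow> frac_packing T LT VHT EHT"
  shows "frac_packing V L VH EH"
proof -
  have finV: "finite V" using G unfolding simple_graph_def by blast
  note cc = cover[unfolded corr_cover_def]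
  have sgH: "simple_graph VH EH" using cc by (rule conjunct1)
  note cc2 = cc[THEN conjunct2]
  have c2: "\<forall>v\<in>V. L v \<subseteq> VH" using cc2 by (rule conjunct1)
  note cc3 = cc2[THEN conjunct2]
  have c3: "(\<Union>v\<in>V. L v) = VH" using cc3 by (rule conjunct1)
  note cc4 = cc3[THEN conjunct2]
  have c4: "\<forall>u\<in>V. \<forall>v\<in>V. u \<noteq> v \<longrightarrow> L u \<inter> L v = {}" using cc4 by (rule conjunct1)
  note cc5 = cc4[THEN conjunct2]
  have c5: "\<forall>v\<in>V. \<forall>x\<in>L v. \<forall>y\<in>L v. x \<noteq> y \<longrightarrow> EH x y" using cc5 by (rule conjunct1)
  note cc6 = cc5[THEN conjunct2]
  have c6: "\<forall>u\<in>V. \<forall>v\<in>V. u \<noteq> v \<and> \<not> E u v \<longrightarrow> (\<forall>x\<in>L u. \<forall>y\<in>L v. \<not> EH x y)" using cc6 by (rule conjunct1)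
  have c7: "\<forall>u\<in>V. \<forall>v\<in>V. E u v \<longrightarrow>
        (\<forall>x\<in>L u. \<forall>y1\<in>L v. \<forall>y2\<in>L v. EH x y1 \<and> EH x y2 \<longrightarrow> y1 = y2) \<and>
        (\<forall>y\<in>L v. \<forall>x1\<in>L u. \<forall>x2\<in>L u. EH x1 y \<and> EH x2 y \<longrightarrow> x1 = x2)" using cc6 by (rule conjunct2)
  have finVH: "finite VH" using sgH unfolding simple_graph_def by blast
  have symH: "\<And>x y. EH x y \<Longrightarrow> EH y x" and irrH: "\<And>x. \<not> EH x x"
    and EHVH: "\<And>x y. EH x y \<Longrightarrow> x \<in> VH \<and> y \<in> VH"
    using sgH unfolding simple_graph_def by blast+
  have Lsub: "\<And>v. v \<in> V \<Longrightarrow> L v \<subseteq> VH" using c2 by blast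
  have VHU: "VH = (\<Union>v\<in>V. L v)" using c3 by simp
  have Ldisj: "\<And>u v. u \<in> V \<Longrightarrow> v \<in> V \<Longrightarrow> u \<noteq> v \<Longrightarrow> L u \<inter> L v = {}"
    using c4 by blast
  have nonadj: "\<And>u v x y. u \<in> V \<Longrightarrow> v \<in> V \<Longrightarrow> u \<noteq> v \<Longrightarrow> \<not> E u v \<Longrightarrow> x \<in> L u \<Longrightarrow> y \<in> L v \<Longrightarrow> \<not> EH x y"
    using c6 by blast
  have match1: "\<And>u v x y1 y2. u \<in> V \<Longrightarrow> v \<in> V \<Longrightarrow> E u v \<Longrightarrow> x \<in> L u \<Longrightarrow> y1 \<in> L v \<Longrightarrow> y2 \<in> L v
      \<Longrightarrow> EH x y1 \<Longrightarrow> EH x y2 \<Longrightarrow> y1 = y2"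
    using c7 by blast
  have match2: "\<And>u v y x1 x2. u \<in> V \<Longrightarrow> v \<in> V \<Longrightarrow> E u v \<Longrightarrow> y \<in> L v \<Longrightarrow> x1 \<in> L u \<Longrightarrow> x2 \<in> L u
      \<Longrightarrow> EH x1 y \<Longrightarrow> EH x2 y \<Longrightarrow> x1 = x2"
    using c7 by blast
  have clique: "\<And>v x y. v \<in> V \<Longrightarrow> x \<in> L v \<Longrightarrow> y \<in> L v \<Longrightarrow> x \<noteq> y \<Longrightarrow> EH x y"
    using c5 by blast
  have finL: "\<And>v. v \<in> V \<Longrightarrow> finite (L v)" using Lsub finVH finite_subset by blast

  define Tn where "Tn = {u\<in>T. \<exists>v\<in>V-T. E u v}"
  define nb where "nb u = (THE v. v \<in> V - T \<and> E u v)" for u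
  have nb_uniq: "nb u = v" if "u \<in> T" "v \<in> V - T" "E u v" for u v
  proof -
    have fin: "finite {v \<in> V - T. E u v}" using finV by auto
    have "\<forall>a1\<in>{v \<in> V - T. E u v}. \<forall>a2\<in>{v \<in> V - T. E u v}. a1 = a2"
      using i that(1) card_le_Suc0_iff_eq[OF fin] by auto
    then show ?thesis unfolding nb_def using that by (intro the_equality) auto
  qed
  have nb: "nb u \<in> V - T \<and> E u (nb u)" if u: "u \<in> Tn" for u
  proof -
    obtain v where v: "u \<in> T" "v \<in> V - T" "E u v" using u unfolding Tn_def by blast
    then show ?thesis using nb_uniq[OF v] by simp
  qed
  have TnT: "Tn \<subseteq> T" using Tn_def by auto
  have finTn: "finite Tn" using TnT TV finV by (meson finite_subset order_trans)
  have cards: "2 \<le> card (L u) \<and> card (L u) \<le> card (L (nb u))" if u: "u \<in> Tn" for u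
  proof -
    have "u \<in> T" using u TnT by blast
    moreover have "nb u \<in> V - T" "E u (nb u)" using nb[OF u] by auto
    ultimately show ?thesis using ii by simp
  qed
  have Lne: "L u \<noteq> {}" if "u \<in> Tn" for u using cards[OF that] by auto

  have "\<forall>u\<in>Tn. \<exists>\<psi>. inj_on \<psi> (L u) \<and> \<psi> ` L u \<subseteq> L (nb u) \<and> (\<forall>x\<in>L u. \<forall>w\<in>L (nb u). EH x w \<longrightarrow> \<psi> x = w)"
  proof
    fix u assume u: "u \<in> Tn"
    have uV: "u \<in> V" and nbV: "nb u \<in> V" and Eu: "E u (nb u)" using u nb TnT TV by auto
    show "\<exists>\<psi>. inj_on \<psi> (L u) \<and> \<psi> ` L u \<subseteq> L (nb u) \<and> (\<forall>x\<in>L u. \<forall>w\<in>L (nb u). EH x w \<longrightarrow> \<psi> x = w)"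
      by (rule ext_inj) (use finL uV nbV cards[OF u] match1[OF uV nbV Eu] match2[OF uV nbV Eu] in auto)
  qed
  from bchoice[OF this] obtain psi where psi': "\<forall>u\<in>Tn. inj_on (psi u) (L u) \<and> psi u ` L u \<subseteq> L (nb u) \<and>
      (\<forall>x\<in>L u. \<forall>w\<in>L (nb u). EH x w \<longrightarrow> psi u x = w)"
    by blast
  have psi: "\<And>u. u \<in> Tn \<Longrightarrow> inj_on (psi u) (L u) \<and> psi u ` L u \<subseteq> L (nb u) \<and>
      (\<forall>x\<in>L u. \<forall>w\<in>L (nb u). EH x w \<longrightarrow> psi u x = w)"
    using psi' by blast

  obtain p0 where p0set: "set_pmf p0 \<subseteq> {I. indep_transversal (V-T) L (restr_VH V L VH (V-T)) (restr_EH V L VH EH (V-T)) I}"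
    and p0prob: "\<And>v x. v \<in> V - T \<Longrightarrow> x \<in> L v \<Longrightarrow> measure_pmf.prob p0 {I. x \<in> I} = 1 / real (card (L v))"
    using iii unfolding frac_packing_def by blast
  have VTT: "V - (V - T) = T" using TV by auto
  have I0sub: "I0 \<subseteq> VH" and I0T: "\<And>u. u \<in> T \<Longrightarrow> I0 \<inter> L u = {}"
    and I0card: "\<And>v. v \<in> V - T \<Longrightarrow> card (I0 \<inter> L v) = 1"
    and I0ind: "\<And>x y. x \<in> I0 \<Longrightarrow> y \<in> I0 \<Longrightarrow> \<not> EH x y"
    if "I0 \<in> set_pmf p0" for I0
  proof -
    have tr: "indep_transversal (V-T) L (restr_VH V L VH (V-T)) (restr_EH V L VH EH (V-T)) I0"
      using that p0set by auto
    then have sub: "I0 \<subseteq> VH - (\<Union>u\<in>T. L u)" unfolding indep_transversal_def restr_VH_def VTT by auto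
    then show "I0 \<subseteq> VH" by auto
    show "\<And>u. u \<in> T \<Longrightarrow> I0 \<inter> L u = {}" using sub by auto
    show "\<And>v. v \<in> V - T \<Longrightarrow> card (I0 \<inter> L v) = 1" using tr unfolding indep_transversal_def by auto
    show "\<And>x y. x \<in> I0 \<Longrightarrow> y \<in> I0 \<Longrightarrow> \<not> EH x y"
      using tr sub unfolding indep_transversal_def restr_EH_def restr_VH_def VTT by blast
  qed
  have uniqI0: "x = y" if p1: "I0 \<in> set_pmf p0" and p2: "v \<in> V - T" and "x \<in> I0" "y \<in> I0" "x \<in> L v" "y \<in> L v" for I0 v x y
  proof -
    obtain z where "I0 \<inter> L v = {z}" using I0card[OF p1 p2] by (metis card_1_singletonE)
    then have "x \<in> {z}" "y \<in> {z}" using that by (metis IntI)+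
    then show ?thesis by simp
  qed
  have finp0: "finite (set_pmf p0)"
    by (rule finite_subset[of _ "Pow VH"]) (use I0sub finVH in auto)

  define PR where "PR = Pi_pmf Tn undefined (\<lambda>u. pmf_of_set (L u))"
  have PRset: "R u \<in> L u" if R: "R \<in> set_pmf PR" and u: "u \<in> Tn" for R u
  proof -
    have "R u \<in> set_pmf (pmf_of_set (L u))"
      using R u finTn unfolding PR_def by (auto simp: set_Pi_pmf PiE_dflt_def)
    moreover have "finite (L u)" using finL u TnT TV by blast
    ultimately show ?thesis using Lne[OF u] by simp
  qed
  have PRcomp: "map_pmf (\<lambda>R. R u) PR = pmf_of_set (L u)" if "u \<in> Tn" for u
    using Pi_pmf_component[OF finTn, of u undefined "\<lambda>u. pmf_of_set (L u)"] that unfolding PR_def by simp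

  define Cf where "Cf I0 R u = (if \<exists>y\<in>L u. psi u y \<in> I0 then THE y. y \<in> L u \<and> psi u y \<in> I0 else R u)"
    for I0 :: "'c set" and R :: "'v \<Rightarrow> 'c" and u
  have Cf_the: "Cf I0 R u = y" if "I0 \<in> set_pmf p0" "u \<in> Tn" "y \<in> L u" "psi u y \<in> I0" for I0 R u y
  proof -
    have "(THE y. y \<in> L u \<and> psi u y \<in> I0) = y"
    proof (rule the_equality)
      show "y \<in> L u \<and> psi u y \<in> I0" using that by auto
      fix y' assume y': "y' \<in> L u \<and> psi u y' \<in> I0"
      have "psi u y' = psi u y"
        by (rule uniqI0[OF that(1) conjunct1[OF nb[OF that(2)]]]) (use y' that psi[OF that(2)] in auto)
      then show "y' = y" using psi[OF that(2)] y' that(3) by (auto dest: inj_onD)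
    qed
    then show ?thesis unfolding Cf_def using that by auto
  qed
  have Cgood: "Cf I0 R u \<in> L u" if "I0 \<in> set_pmf p0" "R \<in> set_pmf PR" "u \<in> Tn" for I0 R u
  proof (cases "\<exists>y\<in>L u. psi u y \<in> I0")
    case True
    then obtain y where "y \<in> L u" "psi u y \<in> I0" by auto
    then show ?thesis using Cf_the that by auto
  next
    case False then show ?thesis using PRset that unfolding Cf_def by auto
  qed

  obtain enc :: "'c \<Rightarrow> nat" where enc: "inj_on enc VH"
    using finite_imp_inj_to_nat_seg[OF finVH] by auto
  define D where "D C u = (if u \<in> Tn then {C u} else {})" for C :: "'v \<Rightarrow> 'c" and u
  define LT where "LT C u = enc ` (L u - D C u)" for C u
  define VHT where "VHT C = (\<Union>u\<in>T. LT C u)" for C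
  define EHT where "EHT C a b = (a \<in> VHT C \<and> b \<in> VHT C \<and> (\<exists>x\<in>VH. \<exists>y\<in>VH. a = enc x \<and> b = enc y \<and> EH x y))"
    for C a b
  have EHTdec: "EH x y" if h: "EHT C (enc x) (enc y)" "x \<in> VH" "y \<in> VH" for C x y
  proof -
    obtain x' y' where "x' \<in> VH" "y' \<in> VH" "enc x = enc x'" "enc y = enc y'" "EH x' y'"
      using h(1) unfolding EHT_def by auto
    then show ?thesis using enc h(2,3) by (metis inj_on_contraD)
  qed
  have finT: "finite T" using TV finV by (rule finite_subset)
  have coverT: "corr_cover T (induced_edges E T) (LT C) (VHT C) (EHT C)" for C
  proof -
    have finVHT: "finite (VHT C)" unfolding VHT_def LT_def
      using finT finL TV by (auto intro!: finite_imageI)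
    have sg: "simple_graph (VHT C) (EHT C)" unfolding simple_graph_def
    proof (intro conjI allI impI finVHT)
      fix a b assume ab: "EHT C a b"
      then obtain x y where xy: "a \<in> VHT C" "b \<in> VHT C" "x \<in> VH" "y \<in> VH" "a = enc x" "b = enc y" "EH x y"
        unfolding EHT_def by blast
      show "a \<in> VHT C" "b \<in> VHT C" using xy by auto
      show "a \<noteq> b"
      proof
        assume "a = b"
        then have "x = y" using xy enc by (metis inj_onD)
        then show False using xy irrH by blast
      qed
      show "EHT C b a" unfolding EHT_def using xy symH by blast
    qed
    have d2: "\<forall>v\<in>T. LT C v \<subseteq> VHT C" unfolding VHT_def by blast
    have d3: "(\<Union>v\<in>T. LT C v) = VHT C" unfolding VHT_def by simp
    have d4: "\<forall>u\<in>T. \<forall>v\<in>T. u \<noteq> v \<longrightarrow> LT C u \<inter> LT C v = {}"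
    proof (intro ballI impI)
      fix u v assume u: "u \<in> T" and v: "v \<in> T" and uv: "u \<noteq> v"
      show "LT C u \<inter> LT C v = {}"
      proof (rule ccontr)
        assume "LT C u \<inter> LT C v \<noteq> {}"
        then obtain x y where xy: "x \<in> L u" "y \<in> L v" "enc x = enc y" unfolding LT_def by blast
        have "x \<in> VH" "y \<in> VH" using xy Lsub u v TV by blast+
        then have "x = y" using xy enc by (metis inj_onD)
        then show False using Ldisj[of u v] u v uv xy TV by blast
      qed
    qed
    have d5: "\<forall>v\<in>T. \<forall>a\<in>LT C v. \<forall>b\<in>LT C v. a \<noteq> b \<longrightarrow> EHT C a b"
    proof (intro ballI impI)
      fix v a b assume v: "v \<in> T" and a: "a \<in> LT C v" and b: "b \<in> LT C v" and ab: "a \<noteq> b"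
      obtain x y where xy: "x \<in> L v" "y \<in> L v" "a = enc x" "b = enc y" using a b unfolding LT_def by blast
      have "x \<noteq> y" using xy ab by blast
      then have "EH x y" using clique[of v x y] xy v TV by blast
      moreover have "x \<in> VH" "y \<in> VH" using xy Lsub v TV by blast+
      moreover have "a \<in> VHT C" "b \<in> VHT C" using a b v unfolding VHT_def by blast+
      ultimately show "EHT C a b" unfolding EHT_def using xy by blast
    qed
    have d6: "\<forall>u\<in>T. \<forall>v\<in>T. u \<noteq> v \<and> \<not> induced_edges E T u v \<longrightarrow> (\<forall>a\<in>LT C u. \<forall>b\<in>LT C v. \<not> EHT C a b)"
    proof (intro ballI impI notI)
      fix u v a b assume u: "u \<in> T" and v: "v \<in> T" and h: "u \<noteq> v \<and> \<not> induced_edges E T u v"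
        and a: "a \<in> LT C u" and b: "b \<in> LT C v" and e: "EHT C a b"
      obtain x y where xy: "x \<in> L u" "y \<in> L v" "a = enc x" "b = enc y" using a b unfolding LT_def by blast
      have xyV: "x \<in> VH" "y \<in> VH" using xy Lsub u v TV by blast+
      have "EH x y" using EHTdec[of C x y] e xy xyV by blast
      moreover have "\<not> E u v" using h u v unfolding induced_edges_def by blast
      ultimately show False using nonadj[of u v x y] u v TV h xy by blast
    qed
    have d7: "\<forall>u\<in>T. \<forall>v\<in>T. induced_edges E T u v \<longrightarrow>
        (\<forall>a\<in>LT C u. \<forall>b1\<in>LT C v. \<forall>b2\<in>LT C v. EHT C a b1 \<and> EHT C a b2 \<longrightarrow> b1 = b2) \<and>
        (\<forall>b\<in>LT C v. \<forall>a1\<in>LT C u. \<forall>a2\<in>LT C u. EHT C a1 b \<and> EHT C a2 b \<longrightarrow> a1 = a2)"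
    proof (intro ballI impI)
      fix u v assume u: "u \<in> T" and v: "v \<in> T" and h: "induced_edges E T u v"
      have uV: "u \<in> V" and vV: "v \<in> V" and Euv: "E u v" using u v TV h unfolding induced_edges_def by blast+
      show "(\<forall>a\<in>LT C u. \<forall>b1\<in>LT C v. \<forall>b2\<in>LT C v. EHT C a b1 \<and> EHT C a b2 \<longrightarrow> b1 = b2) \<and>
        (\<forall>b\<in>LT C v. \<forall>a1\<in>LT C u. \<forall>a2\<in>LT C u. EHT C a1 b \<and> EHT C a2 b \<longrightarrow> a1 = a2)"
      proof (intro conjI ballI impI)
        fix a b1 b2 assume a: "a \<in> LT C u" and b1: "b1 \<in> LT C v" and b2: "b2 \<in> LT C v"
          and e: "EHT C a b1 \<and> EHT C a b2"
        obtain x y1 y2 where xy: "x \<in> L u" "y1 \<in> L v" "y2 \<in> L v" "a = enc x" "b1 = enc y1" "b2 = enc y2"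
          using a b1 b2 unfolding LT_def by blast
        have xyV: "x \<in> VH" "y1 \<in> VH" "y2 \<in> VH" using xy Lsub uV vV by blast+
        have "EH x y1" "EH x y2" using EHTdec[of C] e xy xyV by blast+
        then have "y1 = y2" using match1[OF uV vV Euv] xy by blast
        then show "b1 = b2" using xy by simp
      next
        fix b a1 a2 assume b: "b \<in> LT C v" and a1: "a1 \<in> LT C u" and a2: "a2 \<in> LT C u"
          and e: "EHT C a1 b \<and> EHT C a2 b"
        obtain y x1 x2 where xy: "y \<in> L v" "x1 \<in> L u" "x2 \<in> L u" "b = enc y" "a1 = enc x1" "a2 = enc x2"
          using b a1 a2 unfolding LT_def by blast
        have xyV: "y \<in> VH" "x1 \<in> VH" "x2 \<in> VH" using xy Lsub uV vV by blast+
        have "EH x1 y" "EH x2 y" using EHTdec[of C] e xy xyV by blast+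
        then have "x1 = x2" using match2[OF uV vV Euv] xy by blast
        then show "a1 = a2" using xy by simp
      qed
    qed
    show ?thesis unfolding corr_cover_def by (intro conjI sg d2 d3 d4 d5 d6 d7)
  qed
  have cardLT: "card (LT C u) = (if u \<in> Tn then card (L u) - 1 else card (L u))"
    if "\<forall>u\<in>Tn. C u \<in> L u" "u \<in> T" for C u
  proof -
    have "card (LT C u) = card (L u - D C u)" unfolding LT_def
      by (rule card_image) (rule inj_on_subset[OF enc], use Lsub that TV in auto)
    then show ?thesis using that finL TV unfolding D_def by auto
  qed
  define qf where "qf C = (SOME q. set_pmf q \<subseteq> {I. indep_transversal T (LT C) (VHT C) (EHT C) I} \<and>
      (\<forall>u\<in>T. \<forall>x\<in>LT C u. measure_pmf.prob q {I. x \<in> I} = 1 / real (card (LT C u))))" for C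
  have qf: "set_pmf (qf C) \<subseteq> {I. indep_transversal T (LT C) (VHT C) (EHT C) I} \<and>
      (\<forall>u\<in>T. \<forall>x\<in>LT C u. measure_pmf.prob (qf C) {I. x \<in> I} = 1 / real (card (LT C u)))"
    if "\<forall>u\<in>Tn. C u \<in> L u" for C
  proof -
    have "frac_packing T (LT C) (VHT C) (EHT C)"
      using iv[rule_format, of "LT C" "VHT C" "EHT C"] coverT[of C] cardLT[OF that] unfolding Tn_def
      by auto
    then show ?thesis unfolding qf_def frac_packing_def by (rule someI_ex)
  qed
  define dec where "dec J = {x\<in>VH. enc x \<in> J}" for J
  have decloc: "u \<in> T \<and> x \<notin> D C u" if "J \<subseteq> VHT C" "x \<in> dec J" "u \<in> V" "x \<in> L u" for C J x u
  proof -
    have xVH: "x \<in> VH" and "enc x \<in> VHT C" using that unfolding dec_def by auto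
    then obtain u' z where u': "u' \<in> T" "z \<in> L u' - D C u'" "enc x = enc z"
      unfolding VHT_def LT_def by auto
    have "z \<in> VH" using u' Lsub TV by auto
    then have "z = x" using u' xVH enc by (metis inj_on_contraD)
    moreover have "u' = u" using Ldisj[of u u'] u' that TV \<open>z = x\<close> by auto
    ultimately show ?thesis using u' by auto
  qed
  have dec_in: "\<exists>u\<in>T. x \<in> L u" if "J \<subseteq> VHT C" "x \<in> dec J" for C J x
  proof -
    have xVH: "x \<in> VH" using that unfolding dec_def by auto
    then obtain u where "u \<in> V" "x \<in> L u" using VHU by auto
    then show ?thesis using decloc[OF that] by auto
  qed

  have psi_uniq: "y = y'" if I0: "I0 \<in> set_pmf p0" and v: "v \<in> Tn" and y: "y \<in> L v" "psi v y \<in> I0"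
    and y': "y' \<in> L v" "psi v y' \<in> I0" for I0 v y y'
  proof -
    have "psi v y = psi v y'"
      by (rule uniqI0[OF I0 conjunct1[OF nb[OF v]]]) (use y y' psi[OF v] in auto)
    then show ?thesis using psi[OF v] y y' by (auto dest: inj_onD)
  qed

  define P where "P = p0 \<bind> (\<lambda>I0. PR \<bind> (\<lambda>R. map_pmf (\<lambda>J. I0 \<union> dec J) (qf (Cf I0 R))))"
  show ?thesis unfolding frac_packing_def
  proof (intro exI[of _ P] conjI ballI)
    show "set_pmf P \<subseteq> {I. indep_transversal V L VH EH I}"
    proof
      fix I assume "I \<in> set_pmf P"
      then obtain I0 R J where I0: "I0 \<in> set_pmf p0" and R: "R \<in> set_pmf PR"
        and J: "J \<in> set_pmf (qf (Cf I0 R))" and I: "I = I0 \<union> dec J"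
        unfolding P_def by auto
      define C where "C = Cf I0 R"
      have good: "\<forall>u\<in>Tn. C u \<in> L u" using Cgood I0 R C_def by auto
      have Jtr: "indep_transversal T (LT C) (VHT C) (EHT C) J" using qf[OF good] J C_def by auto
      have JV: "J \<subseteq> VHT C" and Jcard: "\<forall>u\<in>T. card (J \<inter> LT C u) = 1"
        and Jind: "\<forall>a\<in>J. \<forall>b\<in>J. \<not> EHT C a b" using Jtr unfolding indep_transversal_def by auto
      have decVH: "dec J \<subseteq> VH" unfolding dec_def by auto
      have cross: "\<not> EH x y" if x: "x \<in> dec J" and y: "y \<in> I0" for x y
      proof
        assume e: "EH x y"
        obtain u where u: "u \<in> T" "x \<in> L u" using dec_in[OF JV x] by blast
        have "y \<in> VH" using I0sub[OF I0] y by blast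
        then obtain v where v: "v \<in> V" "y \<in> L v" using VHU by blast
        have vT: "v \<notin> T" using I0T[OF I0] v y by blast
        have uV: "u \<in> V" using u TV by blast
        have uv: "u \<noteq> v" using u vT by blast
        have Euv: "E u v" using nonadj[OF uV v(1) uv _ u(2) v(2)] e by blast
        have uTn: "u \<in> Tn" using u v vT Euv unfolding Tn_def by blast
        have nbu: "nb u = v" using nb_uniq[of u v] u v vT Euv by blast
        have "psi u x = y" using psi[OF uTn] u v e nbu by blast
        then have "C u = x" using Cf_the[OF I0 uTn u(2)] y unfolding C_def by blast
        then have "x \<in> D C u" using uTn unfolding D_def by simp
        moreover have "x \<notin> D C u" using decloc[OF JV x uV u(2)] by blast
        ultimately show False by blast
      qed
      show "I \<in> {I. indep_transversal V L VH EH I}" unfolding indep_transversal_def mem_Collect_eq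
      proof (intro conjI ballI)
        show "I \<subseteq> VH" using I I0sub[OF I0] decVH by blast
      next
        fix v assume v: "v \<in> V"
        show "card (I \<inter> L v) = 1"
        proof (cases "v \<in> T")
          case True
          have "I0 \<inter> L v = {}" using I0T[OF I0 True] .
          then have eq: "I \<inter> L v = dec J \<inter> L v" using I by blast
          have img: "enc ` (dec J \<inter> L v) = J \<inter> LT C v"
          proof
            show "enc ` (dec J \<inter> L v) \<subseteq> J \<inter> LT C v"
            proof
              fix a assume "a \<in> enc ` (dec J \<inter> L v)"
              then obtain x where x: "x \<in> dec J" "x \<in> L v" "a = enc x" by blast
              have "x \<notin> D C v" using decloc[OF JV x(1) v x(2)] by blast
              then show "a \<in> J \<inter> LT C v" using x unfolding LT_def dec_def by blast
            qed
            show "J \<inter> LT C v \<subseteq> enc ` (dec J \<inter> L v)"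
            proof
              fix a assume a: "a \<in> J \<inter> LT C v"
              then obtain x where x: "x \<in> L v" "a = enc x" unfolding LT_def by blast
              have "x \<in> VH" using Lsub[OF v] x by blast
              then show "a \<in> enc ` (dec J \<inter> L v)" using a x unfolding dec_def by blast
            qed
          qed
          have "inj_on enc (dec J \<inter> L v)" by (rule inj_on_subset[OF enc]) (auto simp: dec_def)
          then have "card (dec J \<inter> L v) = card (J \<inter> LT C v)" using img card_image by metis
          then show ?thesis using eq Jcard True by simp
        next
          case False
          have "dec J \<inter> L v = {}" using decloc[OF JV _ v] False by blast
          then have "I \<inter> L v = I0 \<inter> L v" using I by blast
          then show ?thesis using I0card[OF I0] v False by simp
        qed
      next
        fix x y assume x: "x \<in> I" and y: "y \<in> I"
        show "\<not> EH x y"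
        proof
          assume e: "EH x y"
          consider "x \<in> I0" "y \<in> I0" | "x \<in> dec J" "y \<in> dec J" | "x \<in> dec J" "y \<in> I0" | "x \<in> I0" "y \<in> dec J"
            using x y I by blast
          then show False
          proof cases
            case 1 then show ?thesis using I0ind[OF I0] e by blast
          next
            case 2
            then have xy: "enc x \<in> J" "enc y \<in> J" "x \<in> VH" "y \<in> VH" unfolding dec_def by auto
            then have "EHT C (enc x) (enc y)" using e JV unfolding EHT_def by blast
            then show ?thesis using Jind xy by blast
          next
            case 3 then show ?thesis using cross e by blast
          next
            case 4 then show ?thesis using cross symH[OF e] by blast
          qed
        qed
      qed
    qed
  next
    fix v x assume v: "v \<in> V" and x: "x \<in> L v"
    have xVH: "x \<in> VH" using Lsub[OF v] x by blast
    have main: "measure_pmf.prob P {I. x \<in> I} =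
      (\<integral>I0. (\<integral>R. measure_pmf.prob (qf (Cf I0 R)) {J. x \<in> I0 \<union> dec J} \<partial>PR) \<partial>p0)"
      unfolding P_def by (simp add: measure_bind_pmf' vimage_def)
    have C_good: "\<forall>u\<in>Tn. Cf I0 R u \<in> L u" if "I0 \<in> set_pmf p0" "R \<in> set_pmf PR" for I0 R
      using Cgood that by blast
    have qsub: "J \<subseteq> VHT (Cf I0 R)" if "I0 \<in> set_pmf p0" "R \<in> set_pmf PR" "J \<in> set_pmf (qf (Cf I0 R))" for I0 R J
      using qf[OF C_good[OF that(1,2)]] that(3) unfolding indep_transversal_def by auto
    show "measure_pmf.prob P {I. x \<in> I} = 1 / real (card (L v))"
    proof (cases "v \<in> T")
      case False
      have inner: "(\<integral>R. measure_pmf.prob (qf (Cf I0 R)) {J. x \<in> I0 \<union> dec J} \<partial>PR) = indicator {I. x \<in> I} I0"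
        if I0: "I0 \<in> set_pmf p0" for I0
      proof -
        have "(\<integral>R. measure_pmf.prob (qf (Cf I0 R)) {J. x \<in> I0 \<union> dec J} \<partial>PR) = (\<integral>R. indicator {I. x \<in> I} I0 \<partial>PR)"
        proof (rule integral_pmf_cong)
          fix R assume R: "R \<in> set_pmf PR"
          have nd: "x \<notin> dec J" if "J \<in> set_pmf (qf (Cf I0 R))" for J
            using decloc[OF qsub[OF I0 R that] _ v x] False by blast
          show "measure_pmf.prob (qf (Cf I0 R)) {J. x \<in> I0 \<union> dec J} = indicator {I. x \<in> I} I0"
          proof (cases "x \<in> I0")
            case True then show ?thesis by simp
          next
            case False
            then have "set_pmf (qf (Cf I0 R)) \<inter> {J. x \<in> I0 \<union> dec J} = {}" using nd by blast
            then show ?thesis using False by (simp add: measure_pmf_zero_iff)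
          qed
        qed
        then show ?thesis by simp
      qed
      have "measure_pmf.prob P {I. x \<in> I} = (\<integral>I0. indicator {I. x \<in> I} I0 \<partial>p0)"
        unfolding main by (rule integral_pmf_cong) (rule inner)
      also have "\<dots> = measure_pmf.prob p0 {I. x \<in> I}" by simp
      also have "\<dots> = 1 / real (card (L v))" using p0prob[of v x] v x False by blast
      finally show ?thesis .
    next
      case vT: True
      have nI0: "x \<notin> I0" if "I0 \<in> set_pmf p0" for I0 using I0T[OF that vT] x by blast
      have set_eq: "{J. x \<in> I0 \<union> dec J} = {J. enc x \<in> J}" if "I0 \<in> set_pmf p0" for I0
        using nI0[OF that] xVH unfolding dec_def by blast
      show ?thesis
      proof (cases "v \<in> Tn")
        case False
        have inner: "measure_pmf.prob (qf (Cf I0 R)) {J. x \<in> I0 \<union> dec J} = 1 / real (card (L v))"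
          if I0: "I0 \<in> set_pmf p0" and R: "R \<in> set_pmf PR" for I0 R
        proof -
          have "enc x \<in> LT (Cf I0 R) v" using x False unfolding LT_def D_def by auto
          then have "measure_pmf.prob (qf (Cf I0 R)) {J. enc x \<in> J} = 1 / real (card (LT (Cf I0 R) v))"
            using qf[OF C_good[OF I0 R]] vT by blast
          also have "card (LT (Cf I0 R) v) = card (L v)" using cardLT[OF C_good[OF I0 R] vT] False by simp
          finally show ?thesis using set_eq[OF I0] by simp
        qed
        have "measure_pmf.prob P {I. x \<in> I} = (\<integral>I0. (\<integral>R. 1 / real (card (L v)) \<partial>PR) \<partial>p0)"
          unfolding main by (intro integral_pmf_cong inner)
        then show ?thesis by simp
      next
        case vTn: True
        define a where "a = card (L v)"
        define b where "b = card (L (nb v))"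
        have ab: "2 \<le> a" "a \<le> b" using cards[OF vTn] unfolding a_def b_def by auto
        have finLv: "finite (L v)" using finL v by blast
        have Lvne: "L v \<noteq> {}" using x by blast
        define g where "g r = (if r = x then 0 else 1 / (real a - 1))" for r
        define F where "F I0 r = (if \<exists>y\<in>L v. psi v y \<in> I0 then THE y. y \<in> L v \<and> psi v y \<in> I0 else r)" for I0 r
        define h where "h I0 = (\<Sum>y\<in>L v - {x}. indicator {I. psi v y \<in> I} I0) / (real a - 1)
            + (1 - (\<Sum>y\<in>L v. indicator {I. psi v y \<in> I} I0)) / real a" for I0 :: "'c set"
        have inner1: "measure_pmf.prob (qf (Cf I0 R)) {J. x \<in> I0 \<union> dec J} = g (Cf I0 R v)"
          if I0: "I0 \<in> set_pmf p0" and R: "R \<in> set_pmf PR" for I0 R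
        proof (cases "Cf I0 R v = x")
          case True
          have "enc x \<notin> VHT (Cf I0 R)"
          proof
            assume "enc x \<in> VHT (Cf I0 R)"
            then obtain u' z where u': "u' \<in> T" "z \<in> L u' - D (Cf I0 R) u'" "enc x = enc z"
              unfolding VHT_def LT_def by auto
            have "z \<in> VH" using u' Lsub TV by auto
            then have "z = x" using u' xVH enc by (metis inj_on_contraD)
            moreover have "u' = v" using Ldisj[of v u'] u' v TV x \<open>z = x\<close> by auto
            ultimately show False using u' True vTn unfolding D_def by auto
          qed
          then have "set_pmf (qf (Cf I0 R)) \<inter> {J. enc x \<in> J} = {}" using qsub[OF I0 R] by blast
          then show ?thesis using True set_eq[OF I0] unfolding g_def by (simp add: measure_pmf_zero_iff)
        next
          case False
          have "enc x \<in> LT (Cf I0 R) v" using x False vTn unfolding LT_def D_def by auto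
          then have "measure_pmf.prob (qf (Cf I0 R)) {J. enc x \<in> J} = 1 / real (card (LT (Cf I0 R) v))"
            using qf[OF C_good[OF I0 R]] vT by blast
          also have "card (LT (Cf I0 R) v) = a - 1" using cardLT[OF C_good[OF I0 R] vT] vTn a_def by simp
          finally show ?thesis using set_eq[OF I0] False ab unfolding g_def by (simp add: of_nat_diff)
        qed
        have inner2: "(\<integral>R. g (Cf I0 R v) \<partial>PR) = (\<Sum>r\<in>L v. g (F I0 r)) / real a" for I0
        proof -
          have "(\<integral>R. g (Cf I0 R v) \<partial>PR) = (\<integral>R. g (F I0 (R v)) \<partial>PR)" unfolding Cf_def F_def by simp
          also have "\<dots> = (\<integral>r. g (F I0 r) \<partial>map_pmf (\<lambda>R. R v) PR)" by simp
          also have "\<dots> = (\<integral>r. g (F I0 r) \<partial>pmf_of_set (L v))" using PRcomp[OF vTn] by simp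
          also have "\<dots> = (\<Sum>r\<in>L v. g (F I0 r)) / real a"
            using integral_pmf_of_set[OF Lvne finLv] a_def by simp
          finally show ?thesis .
        qed
        have inner3: "(\<Sum>r\<in>L v. g (F I0 r)) / real a = h I0" if I0: "I0 \<in> set_pmf p0" for I0
        proof (cases "\<exists>y\<in>L v. psi v y \<in> I0")
          case True
          then obtain y0 where y0: "y0 \<in> L v" "psi v y0 \<in> I0" by blast
          have ind: "indicator {I. psi v y \<in> I} I0 = (if y = y0 then 1 else (0::real))" if yv: "y \<in> L v" for y
          proof (cases "y = y0")
            case True then show ?thesis using y0 by (simp add: indicator_def)
          next
            case False
            then have "psi v y \<notin> I0" using psi_uniq[OF I0 vTn yv _ y0] by blast
            then show ?thesis using False by (simp add: indicator_def)
          qed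
          have F0: "F I0 r = y0" for r
          proof -
            have "Cf I0 (\<lambda>_. r) v = y0" by (rule Cf_the[OF I0 vTn y0])
            then show ?thesis unfolding Cf_def F_def .
          qed
          have s1: "(\<Sum>y\<in>L v. indicator {I. psi v y \<in> I} I0) = (1::real)"
            using ind y0 finLv by (simp add: sum.delta)
          have s2: "(\<Sum>y\<in>L v - {x}. indicator {I. psi v y \<in> I} I0) = (if y0 = x then 0 else (1::real))"
            using ind y0 finLv by (simp add: sum.delta)
          have "(\<Sum>r\<in>L v. g (F I0 r)) / real a = g y0" using F0 a_def ab by simp
          then show ?thesis unfolding h_def s1 s2 g_def by simp
        next
          case False
          have F0: "F I0 r = r" for r using False unfolding F_def by simp
          have ind: "indicator {I. psi v y \<in> I} I0 = (0::real)" if "y \<in> L v" for y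
            using False that by (auto simp: indicator_def)
          have "(\<Sum>r\<in>L v. g r) = (\<Sum>r\<in>L v - {x}. 1 / (real a - 1))"
            unfolding g_def using finLv x by (simp add: sum.If_cases Diff_eq Int_commute)
          also have "\<dots> = 1" using ab finLv x a_def by (simp add: card_Diff_singleton of_nat_diff)
          finally have "(\<Sum>r\<in>L v. g (F I0 r)) / real a = 1 / real a" using F0 by simp
          then show ?thesis unfolding h_def using ind by simp
        qed
        have "measure_pmf.prob P {I. x \<in> I} = (\<integral>I0. h I0 \<partial>p0)"
          unfolding main
        proof (rule integral_pmf_cong)
          fix I0 assume I0: "I0 \<in> set_pmf p0"
          have "(\<integral>R. measure_pmf.prob (qf (Cf I0 R)) {J. x \<in> I0 \<union> dec J} \<partial>PR) = (\<integral>R. g (Cf I0 R v) \<partial>PR)"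
            by (rule integral_pmf_cong) (rule inner1[OF I0])
          then show "(\<integral>R. measure_pmf.prob (qf (Cf I0 R)) {J. x \<in> I0 \<union> dec J} \<partial>PR) = h I0"
            using inner2 inner3[OF I0] by simp
        qed
        also have "\<dots> = 1 / real a"
        proof -
          have intg: "integrable (measure_pmf p0) f" for f :: "'c set \<Rightarrow> real"
            by (rule integrable_measure_pmf_finite[OF finp0])
          have pr: "(\<integral>I0. indicator {I. psi v y \<in> I} I0 \<partial>p0) = 1 / real b" if "y \<in> L v" for y
          proof -
            have "psi v y \<in> L (nb v)" using psi[OF vTn] that by blast
            then show ?thesis using p0prob[of "nb v" "psi v y"] nb[OF vTn] b_def by simp
          qed
          have "(\<integral>I0. h I0 \<partial>p0) = (\<Sum>y\<in>L v - {x}. (\<integral>I0. indicator {I. psi v y \<in> I} I0 \<partial>p0)) / (real a - 1)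
              + (1 - (\<Sum>y\<in>L v. (\<integral>I0. indicator {I. psi v y \<in> I} I0 \<partial>p0))) / real a"
            unfolding h_def
            by (simp add: intg integral_sum[symmetric] del: integral_indicator)
          also have "\<dots> = (\<Sum>y\<in>L v - {x}. 1 / real b) / (real a - 1) + (1 - (\<Sum>y\<in>L v. 1 / real b)) / real a"
            using pr by simp
          also have "\<dots> = (real a - 1) / real b / (real a - 1) + (1 - real a / real b) / real a"
            using finLv x a_def ab by (simp add: card_Diff_singleton of_nat_diff)
          also have "\<dots> = 1 / real a" using ab by (simp add: field_simps)
          finally show ?thesis .
        qed
        finally show ?thesis unfolding a_def .
      qed
    qed
  qed
qed

end
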